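(* Let $(Q,P)$ be a weakly quasi-lattice ordered group and let $\Lambda$ be a $P$-graph with $\mathrm{FA}(\Lambda)\neq\emptyset$. Suppose $\mu,\mu'\in\Lambda$ with $s(\mu)=r(\mu')$, $\mu\mu'\in\mathrm{FA}(\Lambda)$, and $(w_n)$ is a sequence converging to $w$ in $Z(\mu')$. Then there is a subsequence $(w_{n_k})$ such that $\mu\cdot w_{n_k}\to\mu\cdot w$ in $Z(\mu\mu')$.
   Context: $(Q,P)$ weakly quasi-lattice ordered: $Q$ a discrete group, $P\subseteq Q$ a subsemigroup containing the identity $e$ with $P\cap P^{-1}=\{e\}$, and, with $p\le r$ meaning $pq=r$ for some $q\in P$, any two elements of $P$ with a common upper bound have a least common upper bound. A $P$-graph is a countable small category $\Lambda$ (identities $\Lambda^{(0)}$, range/source $r,s$) with a functor $d:\Lambda\to P$ with unique factorisation (if $d(\lambda)=pq$ there are unique $\mu,\nu$ with $\lambda=\mu\nu$, $d(\mu)=p$, $d(\nu)=q$). Write $\lambda\Lambda=\{\lambda\mu: s(\lambda)=r(\mu)\}$, $\mu\preceq\lambda$ iff $\lambda\in\mu\Lambda$. $\mathrm{FA}(\Lambda)$ is the set of $\lambda$ such that for all $\mu\in\lambda\Lambda,\nu\in\Lambda$ there is finite $J\subseteq\Lambda$ with $\mu\Lambda\cap\nu\Lambda=\bigcup_{\kappa\in J}\kappa\Lambda$. A filter is a nonempty hereditary and directed subset of $\Lambda$ (w.r.t. $\preceq$); $\mathcal{F}(\Lambda)$ is the set of filters, topologised as a subspace of $\mathcal{P}(\Lambda)\cong\{0,1\}^\Lambda$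 with the product topology. For $\nu\in\Lambda$, $Z(\nu)=\{x\in\mathcal{F}(\Lambda):\nu\in x\}$ with the subspace topology. For a filter $w$ whose unique element of $\Lambda^{(0)}$ is $s(\mu)$, $\mu\cdot w=\{\zeta\in\Lambda:\zeta\preceq\mu\gamma\text{ for some }\gamma\in w\}$. *)

theory Defs
  imports "HOL-Analysis.Analysis" "HOL-Algebra.Group"
begin

definition ple :: "('q, 'm) monoid_scheme \<Rightarrow> 'q set \<Rightarrow> 'q \<Rightarrow> 'q \<Rightarrow> bool" where
  "ple Q P p r \<longleftrightarrow> (\<exists>q\<in>P. p \<otimes>\<^bsub>Q\<^esub> q = r)"

definition wqlo :: "('q, 'm) monoid_scheme \<Rightarrow> 'q set \<Rightarrow> bool" where
  "wqlo Q P \<longleftrightarrow>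
     group Q \<and> P \<subseteq> carrier Q \<and> \<one>\<^bsub>Q\<^esub> \<in> P \<and>
     (\<forall>p\<in>P. \<forall>q\<in>P. p \<otimes>\<^bsub>Q\<^esub> q \<in> P) \<and>
     P \<inter> (\<lambda>p. inv\<^bsub>Q\<^esub> p) ` P = {\<one>\<^bsub>Q\<^esub>} \<and>
     (\<forall>p\<in>P. \<forall>q\<in>P. (\<exists>t\<in>P. ple Q P p t \<and> ple Q P q t) \<longrightarrow>
        (\<exists>l\<in>P. ple Q P p l \<and> ple Q P q l \<and>
           (\<forall>t\<in>P. ple Q P p t \<and> ple Q P q t \<longrightarrow> ple Q P l t)))"

text \<open>A small category given by its set of morphisms \<open>mor\<close>, its set of identity
  morphisms \<open>obj\<close> (= \<Lambda>^(0)), range and source maps, composition \<open>cmp\<close> (meaningful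
  when \<open>src a = rng b\<close>; \<open>cmp a b\<close> is \<open>a b\<close>), and the degree functor \<open>deg\<close>.\<close>
record ('a, 'q) pgraph =
  mor :: "'a set"
  obj :: "'a set"
  rng :: "'a \<Rightarrow> 'a"
  src :: "'a \<Rightarrow> 'a"
  cmp :: "'a \<Rightarrow> 'a \<Rightarrow> 'a"
  deg :: "'a \<Rightarrow> 'q"

definition is_pgraph :: "('q, 'm) monoid_scheme \<Rightarrow> 'q set \<Rightarrow> ('a, 'q, 'z) pgraph_scheme \<Rightarrow> bool" where
  "is_pgraph Q P L \<longleftrightarrow>
     countable (mor L) \<and> obj L \<subseteq> mor L \<and>
     (\<forall>a\<in>mor L. rng L a \<in> obj L \<and> src L a \<in> obj L) \<and>
     (\<forall>v\<in>obj L. rng L v = v \<and> src L v = v) \<and>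
     (\<forall>a\<in>mor L. \<forall>b\<in>mor L. src L a = rng L b \<longrightarrow>
        cmp L a b \<in> mor L \<and> rng L (cmp L a b) = rng L a \<and> src L (cmp L a b) = src L b) \<and>
     (\<forall>a\<in>mor L. cmp L (rng L a) a = a \<and> cmp L a (src L a) = a) \<and>
     (\<forall>a\<in>mor L. \<forall>b\<in>mor L. \<forall>c\<in>mor L. src L a = rng L b \<and> src L b = rng L c \<longrightarrow>
        cmp L (cmp L a b) c = cmp L a (cmp L b c)) \<and>
     (\<forall>a\<in>mor L. deg L a \<in> P) \<and>
     (\<forall>v\<in>obj L. deg L v = \<one>\<^bsub>Q\<^esub>) \<and>
     (\<forall>a\<in>mor L. \<forall>b\<in>mor L. src L a = rng L b \<longrightarrow>
        deg L (cmp L a b) = deg L a \<otimes>\<^bsub>Q\<^esub> deg L b) \<and>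
     (\<forall>a\<in>mor L. \<forall>p\<in>P. \<forall>q\<in>P. deg L a = p \<otimes>\<^bsub>Q\<^esub> q \<longrightarrow>
        (\<exists>!(m, n). m \<in> mor L \<and> n \<in> mor L \<and> src L m = rng L n \<and>
                   a = cmp L m n \<and> deg L m = p \<and> deg L n = q))"

definition ext :: "('a, 'q, 'z) pgraph_scheme \<Rightarrow> 'a \<Rightarrow> 'a set" where
  "ext L a = {cmp L a b | b. b \<in> mor L \<and> src L a = rng L b}"

definition prec :: "('a, 'q, 'z) pgraph_scheme \<Rightarrow> 'a \<Rightarrow> 'a \<Rightarrow> bool" where
  "prec L m a \<longleftrightarrow> a \<in> ext L m"

definition FA :: "('a, 'q, 'z) pgraph_scheme \<Rightarrow> 'a set" where
  "FA L = {a \<in> mor L. \<forall>m\<in>ext L a. \<forall>n\<in>mor L.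
      \<exists>J. finite J \<and> J \<subseteq> mor L \<and> ext L m \<inter> ext L n = (\<Union>k\<in>J. ext L k)}"

definition is_filter :: "('a, 'q, 'z) pgraph_scheme \<Rightarrow> 'a set \<Rightarrow> bool" where
  "is_filter L x \<longleftrightarrow> x \<subseteq> mor L \<and> x \<noteq> {} \<and>
     (\<forall>a\<in>x. \<forall>m\<in>mor L. prec L m a \<longrightarrow> m \<in> x) \<and>
     (\<forall>a\<in>x. \<forall>b\<in>x. \<exists>c\<in>x. prec L a c \<and> prec L b c)"

definition filters :: "('a, 'q, 'z) pgraph_scheme \<Rightarrow> 'a set set" where
  "filters L = {x. is_filter L x}"

definition Zset :: "('a, 'q, 'z) pgraph_scheme \<Rightarrow> 'a \<Rightarrow> 'a set set" where
  "Zset L n = {x \<in> filters L. n \<in> x}"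

text \<open>Topology: \<open>\<P>(\<Lambda>) \<cong> {0,1}^\<Lambda>\<close> with the product topology; a subset is
  identified with its characteristic function on \<Lambda>.\<close>
definition chi :: "('a, 'q, 'z) pgraph_scheme \<Rightarrow> 'a set \<Rightarrow> ('a \<Rightarrow> bool)" where
  "chi L x = restrict (\<lambda>a. a \<in> x) (mor L)"

definition powerset_top :: "('a, 'q, 'z) pgraph_scheme \<Rightarrow> ('a \<Rightarrow> bool) topology" where
  "powerset_top L = product_topology (\<lambda>_. discrete_topology (UNIV :: bool set)) (mor L)"

definition converges_in :: "('a, 'q, 'z) pgraph_scheme \<Rightarrow> 'a set set \<Rightarrow> (nat \<Rightarrow> 'a set) \<Rightarrow> 'a set \<Rightarrow> bool" where
  "converges_in L S xs x \<longleftrightarrow>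
     (\<forall>n. xs n \<in> S) \<and> x \<in> S \<and>
     limitin (subtopology (powerset_top L) (chi L ` S)) (\<lambda>n. chi L (xs n)) (chi L x) sequentially"

definition act :: "('a, 'q, 'z) pgraph_scheme \<Rightarrow> 'a \<Rightarrow> 'a set \<Rightarrow> 'a set" where
  "act L m w = {z \<in> mor L. \<exists>g\<in>w. src L m = rng L g \<and> prec L z (cmp L m g)}"

end

theory Submission
  imports Defs
begin

lemma limitin_discrete_UNIV:
  "limitin (discrete_topology UNIV) f l F \<longleftrightarrow> eventually (\<lambda>x. f x = l) F"
  unfolding limitin_def by (auto elim: eventually_mono)

context
  fixes Q :: "('q, 'm) monoid_scheme" and P :: "'q set"
    and L :: "('a, 'q, 'z) pgraph_scheme"
  assumes pg: "is_pgraph Q P L" and grp: "group Q" and Psub: "P \<subseteq> carrier Q"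
begin

lemma obj_rs: "v \<in> obj L \<Longrightarrow> rng L v = v \<and> src L v = v"
  using pg[unfolded is_pgraph_def,  THEN conjunct2, THEN conjunct2, THEN conjunct2, THEN conjunct1] by blast

lemma rs_obj: "a \<in> mor L \<Longrightarrow> rng L a \<in> obj L \<and> src L a \<in> obj L"
  using pg[unfolded is_pgraph_def,  THEN conjunct2, THEN conjunct2, THEN conjunct1] by blast

lemma rs_mor: "a \<in> mor L \<Longrightarrow> rng L a \<in> mor L \<and> src L a \<in> mor L"
  using rs_obj pg[unfolded is_pgraph_def, THEN conjunct2, THEN conjunct1] by blast

lemma cmp_cl: "a \<in> mor L \<Longrightarrow> b \<in> mor L \<Longrightarrow> src L a = rng L b \<Longrightarrow>
   cmp L a b \<in> mor L \<and> rng L (cmp L a b) = rng L a \<and> src L (cmp L a b) = src L b"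
  using pg[unfolded is_pgraph_def,  THEN conjunct2, THEN conjunct2, THEN conjunct2, THEN conjunct2, THEN conjunct1] by blast

lemma cmp_src: "a \<in> mor L \<Longrightarrow> cmp L a (src L a) = a"
  using pg[unfolded is_pgraph_def,  THEN conjunct2, THEN conjunct2, THEN conjunct2, THEN conjunct2, THEN conjunct2, THEN conjunct1] by blast

lemma assoc: "a \<in> mor L \<Longrightarrow> b \<in> mor L \<Longrightarrow> c \<in> mor L \<Longrightarrow> src L a = rng L b \<Longrightarrow> src L b = rng L c \<Longrightarrow>
        cmp L (cmp L a b) c = cmp L a (cmp L b c)"
  using pg[unfolded is_pgraph_def,  THEN conjunct2, THEN conjunct2, THEN conjunct2, THEN conjunct2, THEN conjunct2, THEN conjunct2, THEN conjunct1] by blast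

lemma deg_P: "a \<in> mor L \<Longrightarrow> deg L a \<in> P"
  using pg[unfolded is_pgraph_def,  THEN conjunct2, THEN conjunct2, THEN conjunct2, THEN conjunct2, THEN conjunct2, THEN conjunct2, THEN conjunct2, THEN conjunct1] by blast

lemma deg_cmp: "a \<in> mor L \<Longrightarrow> b \<in> mor L \<Longrightarrow> src L a = rng L b \<Longrightarrow>
        deg L (cmp L a b) = deg L a \<otimes>\<^bsub>Q\<^esub> deg L b"
  using pg[unfolded is_pgraph_def,  THEN conjunct2, THEN conjunct2, THEN conjunct2, THEN conjunct2, THEN conjunct2, THEN conjunct2, THEN conjunct2, THEN conjunct2, THEN conjunct2, THEN conjunct1] by blast

lemma uf: "a \<in> mor L \<Longrightarrow> p \<in> P \<Longrightarrow> q \<in> P \<Longrightarrow> deg L a = p \<otimes>\<^bsub>Q\<^esub> q \<Longrightarrow>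
        (\<exists>!(m, n). m \<in> mor L \<and> n \<in> mor L \<and> src L m = rng L n \<and>
                   a = cmp L m n \<and> deg L m = p \<and> deg L n = q)"
  using pg[unfolded is_pgraph_def,  THEN conjunct2, THEN conjunct2, THEN conjunct2, THEN conjunct2, THEN conjunct2, THEN conjunct2, THEN conjunct2, THEN conjunct2, THEN conjunct2, THEN conjunct2] by blast

lemma prec_iff: "prec L a b \<longleftrightarrow> (\<exists>c\<in>mor L. src L a = rng L c \<and> b = cmp L a c)"
  unfolding prec_def ext_def by auto

lemma prec_refl: "a \<in> mor L \<Longrightarrow> prec L a a"
  unfolding prec_iff using rs_mor rs_obj obj_rs cmp_src by metis

lemma prec_mor: "a \<in> mor L \<Longrightarrow> prec L a b \<Longrightarrow> b \<in> mor L \<and> rng L b = rng L a"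
  unfolding prec_iff using cmp_cl by metis

lemma prec_trans: "a \<in> mor L \<Longrightarrow> prec L a b \<Longrightarrow> prec L b c \<Longrightarrow> prec L a c"
proof -
  assume a: "a \<in> mor L" and ab: "prec L a b" and bc: "prec L b c"
  obtain x where x: "x \<in> mor L" "src L a = rng L x" "b = cmp L a x" using ab prec_iff by blast
  obtain y where y: "y \<in> mor L" "src L b = rng L y" "c = cmp L b y" using bc prec_iff by blast
  have sb: "src L b = src L x" using cmp_cl[OF a x(1,2)] x(3) by simp
  have "c = cmp L a (cmp L x y)" using assoc[OF a x(1) y(1) x(2)] sb y x by simp
  moreover have "cmp L x y \<in> mor L" "rng L (cmp L x y) = rng L x" using cmp_cl[OF x(1) y(1)] sb y(2) by auto
  ultimately show ?thesis unfolding prec_iff using x by metis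
qed

lemma prec_left: "m \<in> mor L \<Longrightarrow> a \<in> mor L \<Longrightarrow> src L m = rng L a \<Longrightarrow> prec L a b \<Longrightarrow>
   prec L (cmp L m a) (cmp L m b)"
proof -
  assume m: "m \<in> mor L" and a: "a \<in> mor L" and ma: "src L m = rng L a" and ab: "prec L a b"
  obtain x where x: "x \<in> mor L" "src L a = rng L x" "b = cmp L a x" using ab prec_iff by blast
  have "cmp L m b = cmp L (cmp L m a) x" using assoc[OF m a x(1) ma x(2)] x(3) by simp
  moreover have "src L (cmp L m a) = rng L x" using cmp_cl[OF m a ma] x(2) by simp
  ultimately show ?thesis unfolding prec_iff using x(1) by blast
qed

lemma cancel: "m \<in> mor L \<Longrightarrow> x \<in> mor L \<Longrightarrow> y \<in> mor L \<Longrightarrow> src L m = rng L x \<Longrightarrow> src L m = rng L y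
   \<Longrightarrow> cmp L m x = cmp L m y \<Longrightarrow> x = y"
proof -
  assume m: "m \<in> mor L" and x: "x \<in> mor L" and y: "y \<in> mor L" and mx: "src L m = rng L x"
    and my: "src L m = rng L y" and e: "cmp L m x = cmp L m y"
  have "deg L m \<otimes>\<^bsub>Q\<^esub> deg L x = deg L m \<otimes>\<^bsub>Q\<^esub> deg L y"
    using deg_cmp[OF m x mx] deg_cmp[OF m y my] e by simp
  hence dxy: "deg L x = deg L y"
  proof -
    have c: "deg L m \<in> carrier Q" "deg L x \<in> carrier Q" "deg L y \<in> carrier Q"
      using deg_P m x y Psub by auto
    have "deg L m \<in> Units Q" using group.Units_eq[OF grp] c(1) by simp
    thus ?thesis using monoid.Units_l_cancel[OF group.is_monoid[OF grp] _ c(2) c(3)]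
      \<open>deg L m \<otimes>\<^bsub>Q\<^esub> deg L x = deg L m \<otimes>\<^bsub>Q\<^esub> deg L y\<close> by simp
  qed
  define R where "R = (\<lambda>(a, b). a \<in> mor L \<and> b \<in> mor L \<and> src L a = rng L b \<and>
                   cmp L m x = cmp L a b \<and> deg L a = deg L m \<and> deg L b = deg L x)"
  have u: "\<exists>!q. R q"
    using uf[OF cmp_cl[OF m x mx, THEN conjunct1] deg_P[OF m] deg_P[OF x] deg_cmp[OF m x mx]]
    unfolding R_def .
  have r1: "R (m, x)" unfolding R_def using m x mx by simp
  have r2: "R (m, y)" unfolding R_def using m y my e dxy by simp
  from u obtain q where q: "\<And>q'. R q' \<Longrightarrow> q' = q" by (metis Ex1_def)
  have "(m, x) = (m, y)" using q[OF r1] q[OF r2] by simp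
  thus ?thesis by simp
qed


lemma filter_mor: "is_filter L x \<Longrightarrow> a \<in> x \<Longrightarrow> a \<in> mor L"
  unfolding is_filter_def by blast

lemma filter_her: "is_filter L x \<Longrightarrow> a \<in> x \<Longrightarrow> b \<in> mor L \<Longrightarrow> prec L b a \<Longrightarrow> b \<in> x"
  unfolding is_filter_def by blast

lemma filter_dir: "is_filter L x \<Longrightarrow> a \<in> x \<Longrightarrow> b \<in> x \<Longrightarrow> \<exists>c\<in>x. prec L a c \<and> prec L b c"
  unfolding is_filter_def by blast

lemma filter_rng: "is_filter L x \<Longrightarrow> a \<in> x \<Longrightarrow> b \<in> x \<Longrightarrow> rng L a = rng L b"
proof -
  assume f: "is_filter L x" and a: "a \<in> x" and b: "b \<in> x"
  obtain c where "c \<in> x" "prec L a c" "prec L b c" using filter_dir[OF f a b] by blast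
  thus ?thesis using prec_mor filter_mor[OF f a] filter_mor[OF f b] by metis
qed

lemma act_filter:
  assumes f: "is_filter L w" and m'w: "m' \<in> w" and m: "m \<in> mor L" and mm': "src L m = rng L m'"
  shows "is_filter L (act L m w) \<and> cmp L m m' \<in> act L m w"
proof -
  have m': "m' \<in> mor L" using filter_mor[OF f m'w] .
  have in1: "cmp L m m' \<in> act L m w"
    unfolding act_def using cmp_cl[OF m m' mm'] prec_refl m'w mm' by blast
  have sub: "act L m w \<subseteq> mor L" unfolding act_def by blast
  have her: "\<forall>a\<in>act L m w. \<forall>x\<in>mor L. prec L x a \<longrightarrow> x \<in> act L m w"
  proof (intro ballI impI)
    fix a x assume a: "a \<in> act L m w" and x: "x \<in> mor L" and xa: "prec L x a"
    obtain g where g: "g \<in> w" "src L m = rng L g" "prec L a (cmp L m g)" using a unfolding act_def by blast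
    have "prec L x (cmp L m g)" using prec_trans[OF x xa g(3)] .
    thus "x \<in> act L m w" unfolding act_def using x g by blast
  qed
  have dir: "\<forall>a\<in>act L m w. \<forall>b\<in>act L m w. \<exists>c\<in>act L m w. prec L a c \<and> prec L b c"
  proof (intro ballI)
    fix a b assume a: "a \<in> act L m w" and b: "b \<in> act L m w"
    obtain g1 where g1: "g1 \<in> w" "src L m = rng L g1" "prec L a (cmp L m g1)" using a unfolding act_def by blast
    obtain g2 where g2: "g2 \<in> w" "src L m = rng L g2" "prec L b (cmp L m g2)" using b unfolding act_def by blast
    obtain c where c: "c \<in> w" "prec L g1 c" "prec L g2 c" using filter_dir[OF f g1(1) g2(1)] by blast
    have g1m: "g1 \<in> mor L" and g2m: "g2 \<in> mor L" and cm: "c \<in> mor L"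
      using filter_mor[OF f] g1 g2 c by auto
    have rc: "src L m = rng L c" using prec_mor[OF g1m c(2)] g1(2) by simp
    have am: "a \<in> mor L" and bm: "b \<in> mor L" using a b sub by auto
    have "prec L a (cmp L m c)" using prec_trans[OF am g1(3) prec_left[OF m g1m g1(2) c(2)]] .
    moreover have "prec L b (cmp L m c)" using prec_trans[OF bm g2(3) prec_left[OF m g2m g2(2) c(3)]] .
    moreover have "cmp L m c \<in> act L m w"
      unfolding act_def using cmp_cl[OF m cm rc] prec_refl c(1) rc by blast
    ultimately show "\<exists>c\<in>act L m w. prec L a c \<and> prec L b c" by blast
  qed
  show ?thesis unfolding is_filter_def using sub her dir in1 by blast
qed

lemma act_pointwise:
  assumes m: "m \<in> mor L" and m': "m' \<in> mor L" and mm': "src L m = rng L m'"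
    and FAm: "cmp L m m' \<in> FA L"
    and fws: "\<And>n. is_filter L (ws n)" and m'ws: "\<And>n. m' \<in> ws n"
    and fw: "is_filter L w" and m'w: "m' \<in> w"
    and conv: "\<forall>a\<in>mor L. eventually (\<lambda>n. (a \<in> ws n) = (a \<in> w)) sequentially"
    and z: "z \<in> mor L"
  shows "eventually (\<lambda>n. (z \<in> act L m (ws n)) = (z \<in> act L m w)) sequentially"
proof (cases "z \<in> act L m w")
  case True
  then obtain g where g: "g \<in> w" "src L m = rng L g" "prec L z (cmp L m g)" unfolding act_def by blast
  have "g \<in> mor L" using filter_mor[OF fw g(1)] .
  hence "eventually (\<lambda>n. g \<in> ws n) sequentially" using conv g(1) by (auto elim: eventually_mono)
  thus ?thesis
  proof (rule eventually_mono)
    fix n assume "g \<in> ws n"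
    thus "(z \<in> act L m (ws n)) = (z \<in> act L m w)" using True g z unfolding act_def by blast
  qed
next
  case False
  define mm where "mm = cmp L m m'"
  have mmc: "mm \<in> mor L" "rng L mm = rng L m" "src L mm = src L m'"
    using cmp_cl[OF m m' mm'] mm_def by auto
  have "mm \<in> ext L mm" using prec_refl[OF mmc(1)] unfolding prec_def .
  then obtain J where J: "finite J" "J \<subseteq> mor L" "ext L mm \<inter> ext L z = (\<Union>k\<in>J. ext L k)"
    using FAm z unfolding FA_def mm_def by blast
  have exG: "\<exists>g'. g' \<in> mor L \<and> rng L g' = src L m \<and> k = cmp L m g'" if k: "k \<in> J" for k
  proof -
    have "k \<in> ext L k" using prec_refl[of k] J(2) k unfolding prec_def by blast
    hence "k \<in> ext L mm" using J(3) k by blast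
    then obtain a where a: "a \<in> mor L" "src L mm = rng L a" "k = cmp L mm a"
      using prec_iff[of mm k] unfolding prec_def by blast
    have "k = cmp L m (cmp L m' a)" using assoc[OF m m' a(1) mm'] a mmc mm_def by simp
    moreover have "cmp L m' a \<in> mor L \<and> rng L (cmp L m' a) = src L m"
      using cmp_cl[OF m' a(1)] a(2) mmc mm' by simp
    ultimately show ?thesis by blast
  qed
  define G where "G k = (SOME g'. g' \<in> mor L \<and> rng L g' = src L m \<and> k = cmp L m g')" for k
  have G: "G k \<in> mor L \<and> rng L (G k) = src L m \<and> k = cmp L m (G k)" if "k \<in> J" for k
    unfolding G_def using someI_ex[OF exG[OF that]] .
  have Gw: "G k \<notin> w" if k: "k \<in> J" for k
  proof
    assume Gk: "G k \<in> w"
    have "k \<in> ext L k" using prec_refl[of k] J(2) k unfolding prec_def by blast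
    hence "k \<in> ext L z" using J(3) k by blast
    hence "prec L z k" unfolding prec_def .
    hence "prec L z (cmp L m (G k))" using G[OF k] by simp
    hence "G k \<in> w \<and> src L m = rng L (G k) \<and> prec L z (cmp L m (G k))" using Gk G[OF k] by simp
    hence "z \<in> act L m w" unfolding act_def using z by blast
    thus False using False by blast
  qed
  have "eventually (\<lambda>n. \<forall>k\<in>J. G k \<notin> ws n) sequentially"
  proof (rule eventually_ball_finite[OF J(1)], rule ballI)
    fix k assume k: "k \<in> J"
    show "eventually (\<lambda>n. G k \<notin> ws n) sequentially"
      using conv G[OF k] Gw[OF k] by (auto elim: eventually_mono)
  qed
  thus ?thesis
  proof (rule eventually_mono)
    fix n assume nG: "\<forall>k\<in>J. G k \<notin> ws n"
    have "z \<notin> act L m (ws n)"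
    proof
      assume "z \<in> act L m (ws n)"
      then obtain g where g: "g \<in> ws n" "src L m = rng L g" "prec L z (cmp L m g)" unfolding act_def by blast
      obtain h where h: "h \<in> ws n" "prec L g h" "prec L m' h" using filter_dir[OF fws g(1) m'ws] by blast
      have gm: "g \<in> mor L" and hm: "h \<in> mor L" using filter_mor[OF fws] g h by auto
      have rh: "src L m = rng L h" using prec_mor[OF gm h(2)] g(2) by simp
      have zmh: "prec L z (cmp L m h)" using prec_trans[OF z g(3) prec_left[OF m gm g(2) h(2)]] .
      have mmh: "prec L mm (cmp L m h)" using prec_left[OF m m' mm' h(3)] mm_def by simp
      have "cmp L m h \<in> ext L mm \<inter> ext L z" using zmh mmh unfolding prec_def by blast
      then obtain k where k: "k \<in> J" "cmp L m h \<in> ext L k" using J(3) by blast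
      obtain c where c: "c \<in> mor L" "src L k = rng L c" "cmp L m h = cmp L k c"
        using k(2) prec_iff[of k "cmp L m h"] unfolding prec_def by blast
      have Gk: "G k \<in> mor L" "rng L (G k) = src L m" "k = cmp L m (G k)" using G[OF k(1)] by auto
      have sk: "src L k = src L (G k)" using cmp_cl[OF m Gk(1)] Gk by simp
      have "cmp L m h = cmp L m (cmp L (G k) c)"
        using c(3) assoc[OF m Gk(1) c(1)] Gk sk c(2) by simp
      moreover have "cmp L (G k) c \<in> mor L" "rng L (cmp L (G k) c) = src L m"
        using cmp_cl[OF Gk(1) c(1)] sk c(2) Gk(2) by auto
      ultimately have "h = cmp L (G k) c" using cancel[OF m hm] rh by metis
      hence "prec L (G k) h" unfolding prec_iff using c sk by metis
      hence "G k \<in> ws n" using filter_her[OF fws h(1) Gk(1)] by blast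
      thus False using nG k(1) by blast
    qed
    thus "(z \<in> act L m (ws n)) = (z \<in> act L m w)" using False by blast
  qed
qed

end

lemma chi_app: "a \<in> mor L \<Longrightarrow> chi L x a = (a \<in> x)"
  unfolding chi_def by simp

theorem lemma5p13:
  fixes Q :: "('q, 'm) monoid_scheme" and P :: "'q set"
    and L :: "('a, 'q, 'z) pgraph_scheme"
    and m m' :: 'a and ws :: "nat \<Rightarrow> 'a set" and w :: "'a set"
  assumes "wqlo Q P"
    and "is_pgraph Q P L"
    and "FA L \<noteq> {}"
    and "m \<in> mor L" and "m' \<in> mor L" and "src L m = rng L m'"
    and "cmp L m m' \<in> FA L"
    and "converges_in L (Zset L m') ws w"
  shows "\<exists>g::nat \<Rightarrow> nat. strict_mono g \<and>
           converges_in L (Zset L (cmp L m m')) (\<lambda>k. act L m (ws (g k))) (act L m w)"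
proof -
  have grp: "group Q" and Psub: "P \<subseteq> carrier Q" using assms(1) unfolding wqlo_def by auto
  note pg = assms(2)
  have cv: "\<forall>n. ws n \<in> Zset L m'" "w \<in> Zset L m'"
    "limitin (powerset_top L) (\<lambda>n. chi L (ws n)) (chi L w) sequentially"
    using assms(8) unfolding converges_in_def limitin_subtopology by auto
  have fws: "\<And>n. is_filter L (ws n)" and m'ws: "\<And>n. m' \<in> ws n"
    and fw: "is_filter L w" and m'w: "m' \<in> w"
    using cv(1,2) unfolding Zset_def filters_def by auto
  have conv: "\<forall>a\<in>mor L. eventually (\<lambda>n. (a \<in> ws n) = (a \<in> w)) sequentially"
    using cv(3) unfolding powerset_top_def limitin_componentwise limitin_discrete_UNIV
    by (simp add: chi_app)
  have act_ws: "\<And>n. act L m (ws n) \<in> Zset L (cmp L m m')"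
    using act_filter[OF pg grp Psub fws m'ws assms(4,6)] unfolding Zset_def filters_def by auto
  have act_w: "act L m w \<in> Zset L (cmp L m m')"
    using act_filter[OF pg grp Psub fw m'w assms(4,6)] unfolding Zset_def filters_def by auto
  have pw: "\<forall>z\<in>mor L. eventually (\<lambda>n. chi L (act L m (ws n)) z = chi L (act L m w) z) sequentially"
    using act_pointwise[OF pg grp Psub assms(4,5,6,7) fws m'ws fw m'w conv] by (simp add: chi_app)
  have lim: "limitin (powerset_top L) (\<lambda>n. chi L (act L m (ws n))) (chi L (act L m w)) sequentially"
    unfolding powerset_top_def limitin_componentwise limitin_discrete_UNIV
    using pw by (simp add: chi_def)
  have cc: "converges_in L (Zset L (cmp L m m')) (\<lambda>k. act L m (ws k)) (act L m w)"
    unfolding converges_in_def limitin_subtopology using act_ws act_w lim by auto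
  show ?thesis
  proof (rule exI[of _ id])
    show "strict_mono id \<and> converges_in L (Zset L (cmp L m m')) (\<lambda>k. act L m (ws (id k))) (act L m w)"
      using cc by (simp add: strict_mono_def)
  qed
qed

end
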